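(* Fix real parameters $\ell>0$, $\ell_0\in(0,\ell)$, $\rho>0$, $I_\rho>0$, $EI>0$, $K>0$, $m>0$, $\varkappa>0$, $d>0$. Let $s\in\mathbb{C}$ be such that $K+I_\rho s^2\neq 0$, $b\neq 0$, $a^2\neq b$ (with $a,b$ as in the context), and such that the $4\times 4$ matrix $M=M(s)$ defined in the context is invertible; write $M^{-1}=(M^{-1}_{ij})_{i,j=1}^4$. Let $U\in\mathbb{C}$. Suppose $W,\Psi:[0,\ell]\to\mathbb{C}$ are such that their restrictions to $[0,\ell_0]$ and to $[\ell_0,\ell]$ are twice continuously differentiable (derivatives at $\ell_0$ understood one-sidedly, denoted by arguments $\ell_0-0$ and $\ell_0+0$), and they satisfy on $(0,\ell_0)$ and on $(\ell_0,\ell)$ $$K\big(W''(x)-\Psi'(x)\big)-\rho s^2 W(x)=0,\qquad EI\,\Psi''(x)+K\big(W'(x)-\Psi(x)\big)-I_\rho s^2\Psi(x)=0,$$ together with the boundary conditions $W(0)=W(\ell)=0$, $\Psi'(0)=\Psi'(\ell)=0$ and the interface conditions $$W(\ell_0-0)=W(\ell_0+0),\quad \Psi(\ell_0-0)=\Psi(\ell_0+0),\quad \Psi'(\ell_0-0)=\Psi'(\ell_0+0),$$ $$K\big(W'(\ell_0-0)-W'(\ell_0+0)\big)+(ms^2+\varkappa+ds)\,W(\ell_0)=U.$$ Then for every $\ell_k\in[0,\ell]$ one has $W(\ell_k)=H_1(s)\,U$ and $\Psi'(\ell_k)=H_2(s)\,U$, where $$H_1(s)=\begin{cases}\frac1K\Big(z_2(\ell_k,s)M^{-1}_{14}+z_4(\ell_k,s)M^{-1}_{24}\Big),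 & \ell_k\in[0,\ell_0],\\[4pt] \frac1K\Big(z_2(\ell_k-\ell,s)M^{-1}_{34}+z_4(\ell_k-\ell,s)M^{-1}_{44}\Big), & \ell_k\in(\ell_0,\ell],\end{cases}$$ $$H_2(s)=\begin{cases}\frac1{K^2}\Big[\big(-\lambda_1^2\lambda_2^2K z_4(\ell_k,s)-\rho s^2 z_2(\ell_k,s)\big)M^{-1}_{14}+\big(Kz_5(\ell_k,s)-\rho s^2 z_4(\ell_k,s)\big)M^{-1}_{24}\Big], & \ell_k\in[0,\ell_0],\\[4pt] \frac1{K^2}\Big[\big(-\lambda_1^2\lambda_2^2K z_4(\ell_k-\ell,s)-\rho s^2 z_2(\ell_k-\ell,s)\big)M^{-1}_{34}+\big(Kz_5(\ell_k-\ell,s)-\rho s^2 z_4(\ell_k-\ell,s)\big)M^{-1}_{44}\Big], & \ell_k\in(\ell_0,\ell].\end{cases}$$ In other words, $H_1$ and $H_2$ are the transfer functions of the damped Timoshenko beam with attached mass (input: the force $F_0$ at $\ell_0$; outputs: the displacement $w(\ell_k,t)$, resp. the mechanical curvature $\psi'(\ell_k,t)$).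
   Context: This is the Laplace transform (zero initial data, Laplace variable $s$) of the simply supported Timoshenko beam system $\rho\ddot w-K(w''-\psi')=0$, $I_\rho\ddot\psi-EI\psi''-K(w'-\psi)=0$ on $[0,\ell]$, with $w(0,t)=w(\ell,t)=0$, $\psi'(0,t)=\psi'(\ell,t)=0$, continuity of $w,\psi,\psi'$ at $\ell_0$, and $F_0-m\ddot w(\ell_0,t)-\varkappa w(\ell_0,t)-d\dot w(\ell_0,t)-K(w'(\ell_0-0,t)-w'(\ell_0+0,t))=0$; here $W,\Psi,U$ are the Laplace transforms of $w,\psi,F_0$. Parameters: $\rho$ linear density, $I_\rho$ mass moment of inertia of the cross-section, $EI$ bending stiffness, $K=kGA$ shear stiffness, $m$ attached mass, $\varkappa$ spring stiffness, $d$ damping coefficient. Primes denote derivatives in $x$. Notation: $a=\frac{s^2}{2}\big(\frac{\rho}{K}+\frac{I_\rho}{EI}\big)$, $b=\frac{(K+I_\rho s^2)\rho s^2}{K\,EI}$, $\lambda_1=\sqrt{a+\sqrt{a^2-b}}$, $\lambda_2=\sqrt{a-\sqrt{a^2-b}}$ (principal square roots), so that $\lambda_1^2\lambda_2^2=b$. For $x\in\mathbb{R}$: $z_1(x,s)=\lambda_1^2\cosh\lambda_2x-\lambda_2^2\cosh\lambda_1x$, $z_2(x,s)=\frac{1}{\lambda_1\lambda_2}(\lambda_1^3\sinh\lambda_2x-\lambda_2^3\sinh\lambda_1x)$, $z_3(x,s)=\cosh\lambda_1x-\cosh\lambda_2x$, $z_4(x,s)=\frac{1}{\lambda_1\lambda_2}(\lambda_2\sinh\lambda_1x-\lambda_1\sinh\lambda_2x)$,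 $z_5(x,s)=\lambda_1\sinh\lambda_1x-\lambda_2\sinh\lambda_2x$, $z_6(x,s)=\lambda_1^2\cosh\lambda_1x-\lambda_2^2\cosh\lambda_2x$. Further $v=\frac{K}{EI}-\frac{\rho s^2}{K}$, $v_1=\frac{\rho s^2}{K}$, $v_2=\frac{ms^2+ds+\varkappa}{K}$, and writing $z_j^0=z_j(\ell_0,s)$, $z_j^-=z_j(\ell_0-\ell,s)$, $\beta=\lambda_1^2\lambda_2^2$, the matrix $M$ has rows Row 1: $\big(z_2^0,\; z_4^0,\; -z_2^-,\; -z_4^-\big)$; Row 2: $\big(vz_1^0-\beta z_3^0,\; vz_3^0+z_6^0,\; \beta z_3^- - vz_1^-,\; -z_6^- - vz_3^-\big)$; Row 3: $\big(v_1z_2^0+\beta z_4^0,\; v_1z_4^0-z_5^0,\; -\beta z_4^- - v_1z_2^-,\; z_5^- - v_1z_4^-\big)$; Row 4: $\big(z_1^0+v_2z_2^0,\; z_3^0+v_2z_4^0,\; -z_1^-,\; -z_3^-\big)$. *)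

theory Defs
  imports "HOL-Analysis.Analysis"
begin

definition a_coef :: "real \<Rightarrow> real \<Rightarrow> real \<Rightarrow> real \<Rightarrow> complex \<Rightarrow> complex" where
  "a_coef rho Irho EI K s = s\<^sup>2 / 2 * of_real (rho / K + Irho / EI)"

definition b_coef :: "real \<Rightarrow> real \<Rightarrow> real \<Rightarrow> real \<Rightarrow> complex \<Rightarrow> complex" where
  "b_coef rho Irho EI K s =
     (of_real K + of_real Irho * s\<^sup>2) * of_real rho * s\<^sup>2 / (of_real K * of_real EI)"

definition lam1 :: "real \<Rightarrow> real \<Rightarrow> real \<Rightarrow> real \<Rightarrow> complex \<Rightarrow> complex" where
  "lam1 rho Irho EI K s =
     csqrt (a_coef rho Irho EI K s
            + csqrt ((a_coef rho Irho EI K s)\<^sup>2 - b_coef rho Irho EI K s))"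

definition lam2 :: "real \<Rightarrow> real \<Rightarrow> real \<Rightarrow> real \<Rightarrow> complex \<Rightarrow> complex" where
  "lam2 rho Irho EI K s =
     csqrt (a_coef rho Irho EI K s
            - csqrt ((a_coef rho Irho EI K s)\<^sup>2 - b_coef rho Irho EI K s))"

definition z1 :: "complex \<Rightarrow> complex \<Rightarrow> real \<Rightarrow> complex" where
  "z1 l1 l2 x = l1\<^sup>2 * cosh (l2 * of_real x) - l2\<^sup>2 * cosh (l1 * of_real x)"

definition z2 :: "complex \<Rightarrow> complex \<Rightarrow> real \<Rightarrow> complex" where
  "z2 l1 l2 x = (l1 ^ 3 * sinh (l2 * of_real x) - l2 ^ 3 * sinh (l1 * of_real x)) / (l1 * l2)"

definition z3 :: "complex \<Rightarrow> complex \<Rightarrow> real \<Rightarrow> complex" where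
  "z3 l1 l2 x = cosh (l1 * of_real x) - cosh (l2 * of_real x)"

definition z4 :: "complex \<Rightarrow> complex \<Rightarrow> real \<Rightarrow> complex" where
  "z4 l1 l2 x = (l2 * sinh (l1 * of_real x) - l1 * sinh (l2 * of_real x)) / (l1 * l2)"

definition z5 :: "complex \<Rightarrow> complex \<Rightarrow> real \<Rightarrow> complex" where
  "z5 l1 l2 x = l1 * sinh (l1 * of_real x) - l2 * sinh (l2 * of_real x)"

definition z6 :: "complex \<Rightarrow> complex \<Rightarrow> real \<Rightarrow> complex" where
  "z6 l1 l2 x = l1\<^sup>2 * cosh (l1 * of_real x) - l2\<^sup>2 * cosh (l2 * of_real x)"

definition Mmat ::
  "real \<Rightarrow> real \<Rightarrow> real \<Rightarrow> real \<Rightarrow> real \<Rightarrow> real \<Rightarrow> real \<Rightarrow> real \<Rightarrow> real \<Rightarrow> complex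
   \<Rightarrow> complex^4^4" where
  "Mmat rho Irho EI K m kappa d l l0 s =
    (let L1 = lam1 rho Irho EI K s; L2 = lam2 rho Irho EI K s;
         \<beta> = L1\<^sup>2 * L2\<^sup>2;
         v = of_real (K / EI) - of_real rho * s\<^sup>2 / of_real K;
         v1 = of_real rho * s\<^sup>2 / of_real K;
         v2 = (of_real m * s\<^sup>2 + of_real d * s + of_real kappa) / of_real K;
         z1o = z1 L1 L2 l0; z2o = z2 L1 L2 l0; z3o = z3 L1 L2 l0;
         z4o = z4 L1 L2 l0; z5o = z5 L1 L2 l0; z6o = z6 L1 L2 l0;
         z1m = z1 L1 L2 (l0 - l); z2m = z2 L1 L2 (l0 - l); z3m = z3 L1 L2 (l0 - l);
         z4m = z4 L1 L2 (l0 - l); z5m = z5 L1 L2 (l0 - l); z6m = z6 L1 L2 (l0 - l)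
     in vector [
          vector [z2o, z4o, - z2m, - z4m],
          vector [v * z1o - \<beta> * z3o, v * z3o + z6o, \<beta> * z3m - v * z1m, - z6m - v * z3m],
          vector [v1 * z2o + \<beta> * z4o, v1 * z4o - z5o, - \<beta> * z4m - v1 * z2m, z5m - v1 * z4m],
          vector [z1o + v2 * z2o, z3o + v2 * z4o, - z1m, - z3m]])"

definition H1 ::
  "real \<Rightarrow> real \<Rightarrow> real \<Rightarrow> real \<Rightarrow> real \<Rightarrow> real \<Rightarrow> real \<Rightarrow> real \<Rightarrow> real \<Rightarrow> real
   \<Rightarrow> complex \<Rightarrow> complex" where
  "H1 rho Irho EI K m kappa d l l0 lk s =
    (let L1 = lam1 rho Irho EI K s; L2 = lam2 rho Irho EI K s;
         Mi = matrix_inv (Mmat rho Irho EI K m kappa d l l0 s)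
     in if lk \<le> l0
        then (z2 L1 L2 lk * Mi $ 1 $ 4 + z4 L1 L2 lk * Mi $ 2 $ 4) / of_real K
        else (z2 L1 L2 (lk - l) * Mi $ 3 $ 4 + z4 L1 L2 (lk - l) * Mi $ 4 $ 4) / of_real K)"

definition H2 ::
  "real \<Rightarrow> real \<Rightarrow> real \<Rightarrow> real \<Rightarrow> real \<Rightarrow> real \<Rightarrow> real \<Rightarrow> real \<Rightarrow> real \<Rightarrow> real
   \<Rightarrow> complex \<Rightarrow> complex" where
  "H2 rho Irho EI K m kappa d l l0 lk s =
    (let L1 = lam1 rho Irho EI K s; L2 = lam2 rho Irho EI K s;
         Mi = matrix_inv (Mmat rho Irho EI K m kappa d l l0 s);
         x = (if lk \<le> l0 then lk else lk - l);
         c1 = (if lk \<le> l0 then Mi $ 1 $ 4 else Mi $ 3 $ 4);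
         c2 = (if lk \<le> l0 then Mi $ 2 $ 4 else Mi $ 4 $ 4)
     in ((- (L1\<^sup>2 * L2\<^sup>2) * of_real K * z4 L1 L2 x - of_real rho * s\<^sup>2 * z2 L1 L2 x) * c1
         + (of_real K * z5 L1 L2 x - of_real rho * s\<^sup>2 * z4 L1 L2 x) * c2)
        / (of_real K)\<^sup>2)"

lemma vector4_nth:
  "(vector [x1, x2, x3, x4] :: ('a::zero)^4) $ 1 = x1"
  "(vector [x1, x2, x3, x4] :: ('a::zero)^4) $ 2 = x2"
  "(vector [x1, x2, x3, x4] :: ('a::zero)^4) $ 3 = x3"
  "(vector [x1, x2, x3, x4] :: ('a::zero)^4) $ 4 = x4"
  unfolding vector_def by simp_all

end

theory Submission
  imports Defs
begin


lemma inner_sq_deriv: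
  fixes y :: "real \<Rightarrow> complex"
  assumes "(y has_vector_derivative d) (at t)"
  shows "((\<lambda>x. inner (y x) (y x)) has_real_derivative (2 * inner (y t) d)) (at t)"
proof -
  have "((\<lambda>x. inner (y x) (y x)) has_vector_derivative (inner (y t) d + inner d (y t))) (at t)"
    using bounded_bilinear.has_vector_derivative[OF bounded_bilinear_inner assms assms] .
  then show ?thesis
    by (simp add: has_real_derivative_iff_has_vector_derivative inner_commute)
qed

lemma bound_aux:
  fixes n1 n2 n3 n4 e1 e2 e3 e4 C :: real
  assumes "C \<ge> 0" "n1 \<ge> 0" "n2 \<ge> 0" "n3 \<ge> 0" "n4 \<ge> 0"
   "e1 \<le> C * (n1+n2+n3+n4)" "e2 \<le> C * (n1+n2+n3+n4)" "e3 \<le> C * (n1+n2+n3+n4)" "e4 \<le> C * (n1+n2+n3+n4)"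
  shows "n1*e1 + n2*e2 + n3*e3 + n4*e4 \<le> 4 * C * (n1^2+n2^2+n3^2+n4^2)"
proof -
  have "n1*e1 + n2*e2 + n3*e3 + n4*e4 \<le> n1*(C * (n1+n2+n3+n4)) + n2*(C * (n1+n2+n3+n4)) + n3*(C * (n1+n2+n3+n4)) + n4*(C * (n1+n2+n3+n4))"
    using assms by (intro add_mono mult_left_mono) auto
  also have "\<dots> = C * (n1+n2+n3+n4)^2" by (simp add: power2_eq_square algebra_simps)
  also have "\<dots> \<le> C * (4 * (n1^2+n2^2+n3^2+n4^2))"
  proof (rule mult_left_mono)
    show "(n1+n2+n3+n4)^2 \<le> 4 * (n1^2+n2^2+n3^2+n4^2)"
    proof -
      have "0 \<le> (n1-n2)^2 + (n1-n3)^2 + (n1-n4)^2 + (n2-n3)^2 + (n2-n4)^2 + (n3-n4)^2" by simp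
      then show ?thesis by (simp add: power2_eq_square algebra_simps)
    qed
  qed (use assms in auto)
  finally show ?thesis by (simp add: algebra_simps)
qed

lemma fsum_deriv_bound:
  fixes u1 u2 u3 u4 :: complex and d1 d2 d3 d4 :: complex
  assumes "C \<ge> 0"
    and "norm d1 \<le> C * (norm (u1) + norm (u2) + norm (u3) + norm (u4))"
    and "norm d2 \<le> C * (norm (u1) + norm (u2) + norm (u3) + norm (u4))"
    and "norm d3 \<le> C * (norm (u1) + norm (u2) + norm (u3) + norm (u4))"
    and "norm d4 \<le> C * (norm (u1) + norm (u2) + norm (u3) + norm (u4))"
  shows "\<bar>2 * inner (u1) d1 + 2 * inner (u2) d2 + 2 * inner (u3) d3 + 2 * inner (u4) d4\<bar>
     \<le> 8 * C * (inner (u1) (u1) + inner (u2) (u2) + inner (u3) (u3) + inner (u4) (u4))"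
proof -
  have i: "\<bar>inner u v\<bar> \<le> norm u * norm v" for u v :: complex
    by (rule Cauchy_Schwarz_ineq2)
  have "\<bar>2 * inner (u1) d1 + 2 * inner (u2) d2 + 2 * inner (u3) d3 + 2 * inner (u4) d4\<bar>
     \<le> 2 * (norm (u1) * norm d1 + norm (u2) * norm d2 + norm (u3) * norm d3 + norm (u4) * norm d4)"
    using i[of "u1" d1] i[of "u2" d2] i[of "u3" d3] i[of "u4" d4] by (smt (verit))
  also have "\<dots> \<le> 2 * (4 * C * ((norm (u1))^2 + (norm (u2))^2 + (norm (u3))^2 + (norm (u4))^2))"
    using bound_aux[OF assms(1) norm_ge_zero norm_ge_zero norm_ge_zero norm_ge_zero assms(2-5)] by simp
  finally show ?thesis by (simp add: power2_norm_eq_inner)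
qed

lemma uniq4:
  fixes y1 y2 y3 y4 d1 d2 d3 d4 :: "real \<Rightarrow> complex" and a b C :: real
  assumes ab: "a \<le> b" and C: "C \<ge> 0"
    and D1: "\<And>x. x \<in> {a..b} \<Longrightarrow> (y1 has_vector_derivative d1 x) (at x within {a..b})"
    and D2: "\<And>x. x \<in> {a..b} \<Longrightarrow> (y2 has_vector_derivative d2 x) (at x within {a..b})"
    and D3: "\<And>x. x \<in> {a..b} \<Longrightarrow> (y3 has_vector_derivative d3 x) (at x within {a..b})"
    and D4: "\<And>x. x \<in> {a..b} \<Longrightarrow> (y4 has_vector_derivative d4 x) (at x within {a..b})"
    and B1: "\<And>x. x \<in> {a<..<b} \<Longrightarrow> norm (d1 x) \<le> C * (norm (y1 x) + norm (y2 x) + norm (y3 x) + norm (y4 x))"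
    and B2: "\<And>x. x \<in> {a<..<b} \<Longrightarrow> norm (d2 x) \<le> C * (norm (y1 x) + norm (y2 x) + norm (y3 x) + norm (y4 x))"
    and B3: "\<And>x. x \<in> {a<..<b} \<Longrightarrow> norm (d3 x) \<le> C * (norm (y1 x) + norm (y2 x) + norm (y3 x) + norm (y4 x))"
    and B4: "\<And>x. x \<in> {a<..<b} \<Longrightarrow> norm (d4 x) \<le> C * (norm (y1 x) + norm (y2 x) + norm (y3 x) + norm (y4 x))"
    and init: "(y1 a = 0 \<and> y2 a = 0 \<and> y3 a = 0 \<and> y4 a = 0) \<or> (y1 b = 0 \<and> y2 b = 0 \<and> y3 b = 0 \<and> y4 b = 0)"
  shows "\<forall>x\<in>{a..b}. y1 x = 0 \<and> y2 x = 0 \<and> y3 x = 0 \<and> y4 x = 0"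
proof -
  define f where "f x = inner (y1 x) (y1 x) + inner (y2 x) (y2 x) + inner (y3 x) (y3 x) + inner (y4 x) (y4 x)" for x
  define f' where "f' x = 2 * inner (y1 x) (d1 x) + 2 * inner (y2 x) (d2 x) + 2 * inner (y3 x) (d3 x) + 2 * inner (y4 x) (d4 x)" for x
  have f0: "f x \<ge> 0" for x unfolding f_def by simp
  have fz: "f x = 0 \<Longrightarrow> y1 x = 0 \<and> y2 x = 0 \<and> y3 x = 0 \<and> y4 x = 0" for x
    unfolding f_def by (smt (verit) inner_ge_zero inner_eq_zero_iff)
  have fd: "(f has_real_derivative f' t) (at t)" if "t \<in> {a<..<b}" for t
  proof -
    have at: "at t within {a..b} = at t" using that by (simp add: at_within_Icc_at)
    have "t \<in> {a..b}" using that by auto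
    note h = D1[OF this] D2[OF this] D3[OF this] D4[OF this]
    show ?thesis unfolding f_def f'_def
      by (intro DERIV_add inner_sq_deriv) (use h at in auto)
  qed
  have fb: "\<bar>f' t\<bar> \<le> 8 * C * f t" if "t \<in> {a<..<b}" for t
    unfolding f_def f'_def by (rule fsum_deriv_bound[OF C B1[OF that] B2[OF that] B3[OF that] B4[OF that]])
  have fc: "continuous_on {a..b} f"
  proof -
    have "continuous_on {a..b} y1" "continuous_on {a..b} y2" "continuous_on {a..b} y3" "continuous_on {a..b} y4"
      unfolding continuous_on_eq_continuous_within
      using D1 D2 D3 D4 has_vector_derivative_continuous by blast+
    then show ?thesis unfolding f_def by (intro continuous_intros)
  qed
  show ?thesis
  proof (rule ballI)
    fix x assume x: "x \<in> {a..b}"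
    have "f x = 0"
      using init
    proof
      assume ia: "y1 a = 0 \<and> y2 a = 0 \<and> y3 a = 0 \<and> y4 a = 0"
      define g where "g t = exp (- (8 * C) * t) * f t" for t
      have "g a \<ge> g x"
      proof (rule DERIV_nonpos_imp_decreasing_open[of a x g])
        show "a \<le> x" using x by auto
        show "continuous_on {a..x} g" unfolding g_def
          by (intro continuous_intros continuous_on_subset[OF fc]) (use x in auto)
        fix t assume t: "a < t" "t < x"
        then have tt: "t \<in> {a<..<b}" using x by auto
        have "(g has_real_derivative (exp (- (8 * C) * t) * (- (8 * C)) * f t + exp (- (8 * C) * t) * f' t)) (at t)"
          unfolding g_def by (auto intro!: derivative_eq_intros fd[OF tt])
        moreover have "exp (- (8 * C) * t) * (- (8 * C)) * f t + exp (- (8 * C) * t) * f' t \<le> 0"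
        proof -
          have "f' t - 8 * C * f t \<le> 0" using fb[OF tt] by linarith
          then have "exp (- (8 * C) * t) * (f' t - 8 * C * f t) \<le> 0"
            by (simp add: mult_nonneg_nonpos)
          then show ?thesis by (simp add: algebra_simps)
        qed
        ultimately show "\<exists>y. (g has_real_derivative y) (at t) \<and> y \<le> 0" by blast
      qed
      moreover have "g a = 0" unfolding g_def f_def using ia by simp
      moreover have "g x \<ge> 0" unfolding g_def using f0 by simp
      ultimately have "g x = 0" by linarith
      then show "f x = 0" unfolding g_def by simp
    next
      assume ib: "y1 b = 0 \<and> y2 b = 0 \<and> y3 b = 0 \<and> y4 b = 0"
      define g where "g t = exp ((8 * C) * t) * f t" for t
      have "g x \<le> g b"
      proof (rule DERIV_nonneg_imp_increasing_open[of x b g])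
        show "x \<le> b" using x by auto
        show "continuous_on {x..b} g" unfolding g_def
          by (intro continuous_intros continuous_on_subset[OF fc]) (use x in auto)
        fix t assume t: "x < t" "t < b"
        then have tt: "t \<in> {a<..<b}" using x by auto
        have "(g has_real_derivative (exp ((8 * C) * t) * (8 * C) * f t + exp ((8 * C) * t) * f' t)) (at t)"
          unfolding g_def by (auto intro!: derivative_eq_intros fd[OF tt])
        moreover have "exp ((8 * C) * t) * (8 * C) * f t + exp ((8 * C) * t) * f' t \<ge> 0"
        proof -
          have "f' t + 8 * C * f t \<ge> 0" using fb[OF tt] by linarith
          then have "exp ((8 * C) * t) * (f' t + 8 * C * f t) \<ge> 0"
            by simp
          then show ?thesis by (simp add: algebra_simps)
        qed
        ultimately show "\<exists>y. (g has_real_derivative y) (at t) \<and> y \<ge> 0" by blast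
      qed
      moreover have "g b = 0" unfolding g_def f_def using ib by simp
      moreover have "g x \<ge> 0" unfolding g_def using f0 by simp
      ultimately have "g x = 0" by linarith
      then show "f x = 0" unfolding g_def by simp
    qed
    then show "y1 x = 0 \<and> y2 x = 0 \<and> y3 x = 0 \<and> y4 x = 0" by (rule fz)
  qed
qed



lemma vd_sinh:
  fixes L :: complex shows "((\<lambda>x::real. sinh (L * of_real (x - x0))) has_vector_derivative L * cosh (L * of_real (x - x0))) (at x within S)"
proof -
  have "((\<lambda>w. sinh (L * (w - of_real x0))) has_field_derivative cosh (L * (of_real x - of_real x0)) * L) (at (of_real x))"
    by (auto intro!: derivative_eq_intros)
  from has_vector_derivative_real_field[OF this, of S] show ?thesis by (simp add: mult.commute)
qed

lemma vd_cosh: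
  fixes L :: complex shows "((\<lambda>x::real. cosh (L * of_real (x - x0))) has_vector_derivative L * sinh (L * of_real (x - x0))) (at x within S)"
proof -
  have "((\<lambda>w. cosh (L * (w - of_real x0))) has_field_derivative sinh (L * (of_real x - of_real x0)) * L) (at (of_real x))"
    by (auto intro!: derivative_eq_intros)
  from has_vector_derivative_real_field[OF this, of S] show ?thesis by (simp add: mult.commute)
qed

definition z7 :: "complex \<Rightarrow> complex \<Rightarrow> real \<Rightarrow> complex" where
  "z7 l1 l2 x = l1 ^ 3 * sinh (l1 * of_real x) - l2 ^ 3 * sinh (l2 * of_real x)"

lemma dz2: assumes "L1 \<noteq> 0" "L2 \<noteq> 0"
  shows "((\<lambda>x. z2 L1 L2 (x - x0)) has_vector_derivative z1 L1 L2 (x - x0)) (at x within S)"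
  unfolding z2_def z1_def
  by (rule has_vector_derivative_eq_rhs, (rule has_vector_derivative_divide has_vector_derivative_diff has_vector_derivative_mult_right vd_sinh vd_cosh)+)
     (use assms in \<open>simp add: field_simps power2_eq_square power3_eq_cube\<close>)

lemma dz4: assumes "L1 \<noteq> 0" "L2 \<noteq> 0"
  shows "((\<lambda>x. z4 L1 L2 (x - x0)) has_vector_derivative z3 L1 L2 (x - x0)) (at x within S)"
  unfolding z4_def z3_def
  by (rule has_vector_derivative_eq_rhs, (rule has_vector_derivative_divide has_vector_derivative_diff has_vector_derivative_mult_right vd_sinh vd_cosh)+)
     (use assms in \<open>simp add: field_simps power2_eq_square power3_eq_cube\<close>)

lemma dz1: assumes "L1 \<noteq> 0" "L2 \<noteq> 0"
  shows "((\<lambda>x. z1 L1 L2 (x - x0)) has_vector_derivative - (L1\<^sup>2 * L2\<^sup>2) * z4 L1 L2 (x - x0)) (at x within S)"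
  unfolding z4_def z1_def
  by (rule has_vector_derivative_eq_rhs, (rule has_vector_derivative_divide has_vector_derivative_diff has_vector_derivative_mult_right vd_sinh vd_cosh)+)
     (use assms in \<open>simp add: field_simps power2_eq_square power3_eq_cube\<close>)

lemma dz3:
  shows "((\<lambda>x. z3 L1 L2 (x - x0)) has_vector_derivative z5 L1 L2 (x - x0)) (at x within S)"
  unfolding z3_def z5_def
  by (rule has_vector_derivative_eq_rhs, (rule has_vector_derivative_divide has_vector_derivative_diff has_vector_derivative_mult_right vd_sinh vd_cosh)+)
     (simp add: field_simps power2_eq_square power3_eq_cube)

lemma dz5:
  shows "((\<lambda>x. z5 L1 L2 (x - x0)) has_vector_derivative z6 L1 L2 (x - x0)) (at x within S)"
  unfolding z6_def z5_def
  by (rule has_vector_derivative_eq_rhs, (rule has_vector_derivative_divide has_vector_derivative_diff has_vector_derivative_mult_right vd_sinh vd_cosh)+)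
     (simp add: field_simps power2_eq_square power3_eq_cube)

lemma dz6:
  shows "((\<lambda>x. z6 L1 L2 (x - x0)) has_vector_derivative z7 L1 L2 (x - x0)) (at x within S)"
  unfolding z6_def z7_def
  by (rule has_vector_derivative_eq_rhs, (rule has_vector_derivative_divide has_vector_derivative_diff has_vector_derivative_mult_right vd_sinh vd_cosh)+)
     (simp add: field_simps power2_eq_square power3_eq_cube)

lemma z5_rel: assumes "L1 \<noteq> 0" "L2 \<noteq> 0"
  shows "z5 L1 L2 x = z2 L1 L2 x + (L1\<^sup>2 + L2\<^sup>2) * z4 L1 L2 x"
  unfolding z2_def z4_def z5_def using assms
  by (simp add: field_simps power2_eq_square power3_eq_cube)

lemma z7_rel: assumes "L1 \<noteq> 0" "L2 \<noteq> 0"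
  shows "z7 L1 L2 x = (L1\<^sup>2 + L2\<^sup>2) * z5 L1 L2 x - L1\<^sup>2 * L2\<^sup>2 * z4 L1 L2 x"
  unfolding z7_def z4_def z5_def using assms
  by (simp add: field_simps power2_eq_square power3_eq_cube)

lemma z_at0: "z2 L1 L2 0 = 0" "z4 L1 L2 0 = 0" "z3 L1 L2 0 = 0" "z5 L1 L2 0 = 0"
  "z1 L1 L2 0 = L1\<^sup>2 - L2\<^sup>2" "z6 L1 L2 0 = L1\<^sup>2 - L2\<^sup>2"
  by (simp_all add: z1_def z2_def z3_def z4_def z5_def z6_def)



lemma uniq_lin:
  fixes y1 y2 y3 y4 d1 d2 d3 d4 :: "real \<Rightarrow> complex" and a b :: real and p q r :: complex
  assumes ab: "a \<le> b"
    and D1: "\<And>x. x \<in> {a..b} \<Longrightarrow> (y1 has_vector_derivative d1 x) (at x within {a..b})"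
    and D2: "\<And>x. x \<in> {a..b} \<Longrightarrow> (y2 has_vector_derivative d2 x) (at x within {a..b})"
    and D3: "\<And>x. x \<in> {a..b} \<Longrightarrow> (y3 has_vector_derivative d3 x) (at x within {a..b})"
    and D4: "\<And>x. x \<in> {a..b} \<Longrightarrow> (y4 has_vector_derivative d4 x) (at x within {a..b})"
    and E: "\<And>x. x \<in> {a<..<b} \<Longrightarrow> d1 x = y2 x \<and> d2 x = y4 x + p * y1 x \<and> d3 x = y4 x \<and> d4 x = q * y2 x + r * y3 x"
    and init: "(y1 a = 0 \<and> y2 a = 0 \<and> y3 a = 0 \<and> y4 a = 0) \<or> (y1 b = 0 \<and> y2 b = 0 \<and> y3 b = 0 \<and> y4 b = 0)"
  shows "\<forall>x\<in>{a..b}. y1 x = 0 \<and> y2 x = 0 \<and> y3 x = 0 \<and> y4 x = 0"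
proof -
  define C where "C = 1 + norm p + norm q + norm r"
  have C0: "C \<ge> 0" "C \<ge> 1" unfolding C_def by auto
  have key: "norm (d x) \<le> C * (norm (y1 x) + norm (y2 x) + norm (y3 x) + norm (y4 x))"
    if "x \<in> {a<..<b}" and d: "d = d1 \<or> d = d2 \<or> d = d3 \<or> d = d4" for x d
  proof -
    define S where "S = norm (y1 x) + norm (y2 x) + norm (y3 x) + norm (y4 x)"
    have S0: "S \<ge> 0" unfolding S_def by simp
    have n: "norm (y1 x) \<le> S" "norm (y2 x) \<le> S" "norm (y3 x) \<le> S" "norm (y4 x) \<le> S"
      unfolding S_def by auto
    have m: "norm p * norm (y1 x) \<le> norm p * S" "norm q * norm (y2 x) \<le> norm q * S"
       "norm r * norm (y3 x) \<le> norm r * S"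
      using n by (auto intro: mult_left_mono)
    have CS: "C * S = S + norm p * S + norm q * S + norm r * S" unfolding C_def by (simp add: algebra_simps)
    have np: "norm (p * y1 x) = norm p * norm (y1 x)" "norm (q * y2 x) = norm q * norm (y2 x)"
      "norm (r * y3 x) = norm r * norm (y3 x)" by (simp_all add: norm_mult)
    have t1: "norm (y4 x + p * y1 x) \<le> norm (y4 x) + norm (p * y1 x)" by (rule norm_triangle_ineq)
    have t2: "norm (q * y2 x + r * y3 x) \<le> norm (q * y2 x) + norm (r * y3 x)" by (rule norm_triangle_ineq)
    have nz: "0 \<le> norm p * S" "0 \<le> norm q * S" "0 \<le> norm r * S" using S0 by simp_all
    have e: "norm (d x) \<le> norm (y2 x) \<or> norm (d x) \<le> norm (y4 x) + norm p * norm (y1 x) \<or>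
       norm (d x) \<le> norm (y4 x) \<or> norm (d x) \<le> norm q * norm (y2 x) + norm r * norm (y3 x)"
      using d E[OF that(1)] t1 t2 np by auto
    have "norm (d x) \<le> C * S"
      using e n m CS nz S0 by (elim disjE) linarith+
    then show ?thesis unfolding S_def .
  qed
  show ?thesis
  proof (rule uniq4[of a b C y1 d1 y2 d2 y3 d3 y4 d4])
    show "\<And>x. x \<in> {a<..<b} \<Longrightarrow> cmod (d1 x) \<le> C * (cmod (y1 x) + cmod (y2 x) + cmod (y3 x) + cmod (y4 x))"
      by (rule key) auto
    show "\<And>x. x \<in> {a<..<b} \<Longrightarrow> cmod (d2 x) \<le> C * (cmod (y1 x) + cmod (y2 x) + cmod (y3 x) + cmod (y4 x))"
      by (rule key) auto
    show "\<And>x. x \<in> {a<..<b} \<Longrightarrow> cmod (d3 x) \<le> C * (cmod (y1 x) + cmod (y2 x) + cmod (y3 x) + cmod (y4 x))"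
      by (rule key) auto
    show "\<And>x. x \<in> {a<..<b} \<Longrightarrow> cmod (d4 x) \<le> C * (cmod (y1 x) + cmod (y2 x) + cmod (y3 x) + cmod (y4 x))"
      by (rule key) auto
  qed (use ab C0 D1 D2 D3 D4 init in auto)
qed

lemma alg2:
  fixes A B z2 z4 S c v1 :: complex
  assumes "c \<noteq> 0"
  shows "1 / c * (A * (- (c * v1) * (z2 + S * z4)) + B * (S * (z2 + S * z4) - c * v1 * z4)
      + (c - S) * (A * (- (c * v1) * z4) + B * (z2 + S * z4)))
    = A * (- (c * v1) * z4) + B * (z2 + S * z4) - v1 * (A * z2 + B * z4)"
proof -
  have "A * (- (c * v1) * (z2 + S * z4)) + B * (S * (z2 + S * z4) - c * v1 * z4)
      + (c - S) * (A * (- (c * v1) * z4) + B * (z2 + S * z4))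
     = c * (A * (- (c * v1) * z4) + B * (z2 + S * z4) - v1 * (A * z2 + B * z4))"
    by (simp add: algebra_simps)
  then show ?thesis using assms by simp
qed

lemma alg3:
  fixes W1 W3 v1 k e Q :: complex
  assumes "e \<noteq> 0" "Q \<noteq> 0"
  shows "W3 - v1 * W1 = (- k * (W1 - e / Q * (W3 + (k / e - v1) * W1)) + (Q - k) * (e / Q * (W3 + (k / e - v1) * W1))) / e"
proof -
  have "- k * (W1 - e / Q * (W3 + (k / e - v1) * W1)) + (Q - k) * (e / Q * (W3 + (k / e - v1) * W1))
     = - k * W1 + Q * (e / Q * (W3 + (k / e - v1) * W1))"
  proof -
    have "- k * (W1 - P) + (Q - k) * P = - k * W1 + Q * P" for P by (simp add: algebra_simps)
    then show ?thesis .
  qed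
  also have "\<dots> = - k * W1 + e * (W3 + (k / e - v1) * W1)" using assms by simp
  also have "\<dots> = e * (W3 - v1 * W1)" using assms by (simp add: algebra_simps)
  finally show ?thesis using assms by simp
qed

lemma side:
  fixes W W1 W2 P P1 P2 :: "real \<Rightarrow> complex" and a b x0 rho Irho EI K :: real and s L1 L2 :: complex
  assumes K: "K > 0" "EI > 0" "of_real K + of_real Irho * s\<^sup>2 \<noteq> 0"
    and L: "L1 \<noteq> 0" "L2 \<noteq> 0" "L1\<^sup>2 \<noteq> L2\<^sup>2"
    and LS: "L1\<^sup>2 + L2\<^sup>2 = s\<^sup>2 * (of_real rho / of_real K + of_real Irho / of_real EI)"
    and LP: "L1\<^sup>2 * L2\<^sup>2 = (of_real K + of_real Irho * s\<^sup>2) * of_real rho * s\<^sup>2 / (of_real K * of_real EI)"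
    and ab: "a \<le> b" and x0: "x0 = a \<or> x0 = b"
    and dW: "\<And>x. x \<in> {a..b} \<Longrightarrow> (W has_vector_derivative W1 x) (at x within {a..b})"
    and dW1: "\<And>x. x \<in> {a..b} \<Longrightarrow> (W1 has_vector_derivative W2 x) (at x within {a..b})"
    and dP: "\<And>x. x \<in> {a..b} \<Longrightarrow> (P has_vector_derivative P1 x) (at x within {a..b})"
    and dP1: "\<And>x. x \<in> {a..b} \<Longrightarrow> (P1 has_vector_derivative P2 x) (at x within {a..b})"
    and ode1: "\<And>x. x \<in> {a<..<b} \<Longrightarrow>
        of_real K * (W2 x - P1 x) - of_real rho * s\<^sup>2 * W x = 0"
    and ode2: "\<And>x. x \<in> {a<..<b} \<Longrightarrow>
        of_real EI * P2 x + of_real K * (W1 x - P x) - of_real Irho * s\<^sup>2 * P x = 0"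
    and bc: "W x0 = 0" "P1 x0 = 0"
  shows "\<exists>A B. \<forall>x\<in>{a..b}.
      W x = A * z2 L1 L2 (x - x0) + B * z4 L1 L2 (x - x0) \<and>
      W1 x = A * z1 L1 L2 (x - x0) + B * z3 L1 L2 (x - x0) \<and>
      P x = of_real EI / (of_real K + of_real Irho * s\<^sup>2) *
         (A * (- (L1\<^sup>2 * L2\<^sup>2) * z3 L1 L2 (x - x0)) + B * z6 L1 L2 (x - x0)
          + (of_real K / of_real EI - of_real rho * s\<^sup>2 / of_real K) * (A * z1 L1 L2 (x - x0) + B * z3 L1 L2 (x - x0))) \<and>
      P1 x = A * (- (L1\<^sup>2 * L2\<^sup>2) * z4 L1 L2 (x - x0)) + B * z5 L1 L2 (x - x0)
          - of_real rho * s\<^sup>2 / of_real K * (A * z2 L1 L2 (x - x0) + B * z4 L1 L2 (x - x0))"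
proof -
  define Q where "Q = of_real K + of_real Irho * s\<^sup>2"
  define v1 where "v1 = of_real rho * s\<^sup>2 / (of_real K :: complex)"
  define v where "v = of_real K / of_real EI - of_real rho * s\<^sup>2 / (of_real K :: complex)"
  define \<beta> where "\<beta> = L1\<^sup>2 * L2\<^sup>2"
  define D where "D = L1\<^sup>2 - L2\<^sup>2"
  have D0: "D \<noteq> 0" using L(3) unfolding D_def by simp
  have Kc: "(of_real K :: complex) \<noteq> 0" "(of_real EI :: complex) \<noteq> 0" using K by auto
  have Q0: "Q \<noteq> 0" using K(3) unfolding Q_def .
  define A where "A = W1 x0 / D"
  define B where "B = (Q / of_real EI * P x0 - v * W1 x0) / D"
  define Wc where "Wc x = A * z2 L1 L2 (x - x0) + B * z4 L1 L2 (x - x0)" for x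
  define W1c where "W1c x = A * z1 L1 L2 (x - x0) + B * z3 L1 L2 (x - x0)" for x
  define Pc where "Pc x = of_real EI / Q * (A * (- \<beta> * z3 L1 L2 (x - x0)) + B * z6 L1 L2 (x - x0) + v * (A * z1 L1 L2 (x - x0) + B * z3 L1 L2 (x - x0)))" for x
  define P1c where "P1c x = A * (- \<beta> * z4 L1 L2 (x - x0)) + B * z5 L1 L2 (x - x0) - v1 * (A * z2 L1 L2 (x - x0) + B * z4 L1 L2 (x - x0))" for x
  define W2c where "W2c x = A * (- \<beta> * z4 L1 L2 (x - x0)) + B * z5 L1 L2 (x - x0)" for x
  define Pdc where "Pdc x = of_real EI / Q * (A * (- \<beta> * z5 L1 L2 (x - x0)) + B * z7 L1 L2 (x - x0) + v * (A * (- \<beta> * z4 L1 L2 (x - x0)) + B * z5 L1 L2 (x - x0)))" for x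
  define P2c where "P2c x = A * (- \<beta> * z3 L1 L2 (x - x0)) + B * z6 L1 L2 (x - x0) - v1 * (A * z1 L1 L2 (x - x0) + B * z3 L1 L2 (x - x0))" for x
  have cW: "(Wc has_vector_derivative W1c x) (at x within S)" for x S
    unfolding Wc_def W1c_def
    by (intro has_vector_derivative_add has_vector_derivative_mult_right dz2 dz4 L(1,2))
  have cW1: "(W1c has_vector_derivative W2c x) (at x within S)" for x S
    unfolding W1c_def W2c_def \<beta>_def
    by (rule has_vector_derivative_eq_rhs,
        (rule has_vector_derivative_add has_vector_derivative_mult_right dz1 dz3 L(1,2))+) (simp add: algebra_simps)
  have cP: "(Pc has_vector_derivative Pdc x) (at x within S)" for x S
    unfolding Pc_def Pdc_def
    by (rule has_vector_derivative_eq_rhs,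
        (rule has_vector_derivative_add has_vector_derivative_mult_right dz1 dz3 dz6 L(1,2))+)
      (simp add: algebra_simps \<beta>_def)
  have cP1: "(P1c has_vector_derivative P2c x) (at x within S)" for x S
    unfolding P1c_def P2c_def
    by (rule has_vector_derivative_eq_rhs,
        (rule has_vector_derivative_add has_vector_derivative_diff has_vector_derivative_mult_right dz1 dz2 dz3 dz4 dz5 L(1,2))+)
      (simp add: algebra_simps \<beta>_def)
  have I1: "W2c x = P1c x + v1 * Wc x" for x
    unfolding W2c_def P1c_def Wc_def by (simp add: algebra_simps)
  define c where "c = Q / of_real EI"
  have c0: "c \<noteq> 0" using Q0 Kc unfolding c_def by simp
  have hb: "\<beta> = c * v1" unfolding \<beta>_def LP c_def Q_def v1_def using Kc by (simp add: field_simps)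
  have hv: "v = c - (L1\<^sup>2 + L2\<^sup>2)" unfolding LS v_def c_def Q_def using Kc
    by (simp add: field_simps power2_eq_square)
  have he: "of_real EI / Q = 1 / c" unfolding c_def by simp
  have I2: "Pdc x = P1c x" for x
    unfolding Pdc_def P1c_def z7_rel[OF L(1,2)] z5_rel[OF L(1,2)] \<beta>_def[symmetric] he hb hv
    by (rule alg2[OF c0])
  have hv': "v = of_real K / of_real EI - v1" by (simp add: v_def v1_def)
  have iq: "of_real Irho * s\<^sup>2 = Q - of_real K" by (simp add: Q_def)
  have I3: "P2c x = (- of_real K * (W1c x - Pc x) + of_real Irho * s\<^sup>2 * Pc x) / of_real EI" for x
    unfolding iq P2c_def Pc_def W1c_def hv'
    by (rule alg3[OF Kc(2) Q0])
  have "\<forall>x\<in>{a..b}. W x - Wc x = 0 \<and> W1 x - W1c x = 0 \<and> P x - Pc x = 0 \<and> P1 x - P1c x = 0"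
  proof (rule uniq_lin[of a b "\<lambda>x. W x - Wc x" "\<lambda>x. W1 x - W1c x" "\<lambda>x. W1 x - W1c x" "\<lambda>x. W2 x - W2c x"
          "\<lambda>x. P x - Pc x" "\<lambda>x. P1 x - Pdc x" "\<lambda>x. P1 x - P1c x" "\<lambda>x. P2 x - P2c x" v1 "- of_real K / of_real EI" "Q / of_real EI"])
    show "a \<le> b" by (rule ab)
    show "((\<lambda>x. W x - Wc x) has_vector_derivative W1 x - W1c x) (at x within {a..b})" if "x \<in> {a..b}" for x
      by (intro has_vector_derivative_diff dW that cW)
    show "((\<lambda>x. W1 x - W1c x) has_vector_derivative W2 x - W2c x) (at x within {a..b})" if "x \<in> {a..b}" for x
      by (intro has_vector_derivative_diff dW1 that cW1)
    show "((\<lambda>x. P x - Pc x) has_vector_derivative P1 x - Pdc x) (at x within {a..b})" if "x \<in> {a..b}" for x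
      by (intro has_vector_derivative_diff dP that cP)
    show "((\<lambda>x. P1 x - P1c x) has_vector_derivative P2 x - P2c x) (at x within {a..b})" if "x \<in> {a..b}" for x
      by (intro has_vector_derivative_diff dP1 that cP1)
    fix x assume x: "x \<in> {a<..<b}"
    have w2: "W2 x = P1 x + v1 * W x"
      using ode1[OF x] Kc unfolding v1_def by (simp add: field_simps)
    have p2: "P2 x = (- of_real K * (W1 x - P x) + of_real Irho * s\<^sup>2 * P x) / of_real EI"
      using ode2[OF x] Kc by (simp add: field_simps)
    show "W1 x - W1c x = W1 x - W1c x \<and>
          W2 x - W2c x = P1 x - P1c x + v1 * (W x - Wc x) \<and>
          P1 x - Pdc x = P1 x - P1c x \<and>
          P2 x - P2c x = - of_real K / of_real EI * (W1 x - W1c x) + Q / of_real EI * (P x - Pc x)"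
      unfolding w2 p2 I1 I2 I3 Q_def using Kc by (simp add: field_simps)
  next
    have "W x0 - Wc x0 = 0 \<and> W1 x0 - W1c x0 = 0 \<and> P x0 - Pc x0 = 0 \<and> P1 x0 - P1c x0 = 0"
    proof (intro conjI)
      show "W x0 - Wc x0 = 0" unfolding Wc_def using bc by (simp add: z_at0)
      show "W1 x0 - W1c x0 = 0" unfolding W1c_def A_def using D0 by (simp add: z_at0 D_def[symmetric])
      show "P1 x0 - P1c x0 = 0" unfolding P1c_def using bc by (simp add: z_at0)
      show "P x0 - Pc x0 = 0" unfolding Pc_def A_def B_def using D0 Q0 Kc
        by (simp add: z_at0 D_def[symmetric] field_simps)
    qed
    then show "((W a - Wc a = 0 \<and> W1 a - W1c a = 0 \<and> P a - Pc a = 0 \<and> P1 a - P1c a = 0) \<or>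
         (W b - Wc b = 0 \<and> W1 b - W1c b = 0 \<and> P b - Pc b = 0 \<and> P1 b - P1c b = 0))"
      using x0 by auto
  qed
  then show ?thesis
    unfolding Wc_def W1c_def Pc_def P1c_def Q_def v_def v1_def \<beta>_def
    by (intro exI[of _ A] exI[of _ B]) auto
qed



theorem proposition1:
  fixes l l0 rho Irho EI K m kappa d :: real
    and s U :: complex
    and W Psi :: "real \<Rightarrow> complex"
    and W1l W2l P1l P2l W1r W2r P1r P2r :: "real \<Rightarrow> complex"
  assumes l0: "0 < l0" "l0 < l"
    and pos: "rho > 0" "Irho > 0" "EI > 0" "K > 0" "m > 0" "kappa > 0" "d > 0"
    and s_K: "of_real K + of_real Irho * s\<^sup>2 \<noteq> 0"
    and s_b: "b_coef rho Irho EI K s \<noteq> 0"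
    and s_ab: "(a_coef rho Irho EI K s)\<^sup>2 \<noteq> b_coef rho Irho EI K s"
    and M_inv: "invertible (Mmat rho Irho EI K m kappa d l l0 s)"
    \<comment> \<open>restriction to [0,l0] is C^2 (one-sided derivatives at the endpoints)\<close>
    and W_l: "\<And>x. x \<in> {0..l0} \<Longrightarrow> (W has_vector_derivative W1l x) (at x within {0..l0})"
    and W'_l: "\<And>x. x \<in> {0..l0} \<Longrightarrow> (W1l has_vector_derivative W2l x) (at x within {0..l0})"
    and W''_l: "continuous_on {0..l0} W2l"
    and P_l: "\<And>x. x \<in> {0..l0} \<Longrightarrow> (Psi has_vector_derivative P1l x) (at x within {0..l0})"
    and P'_l: "\<And>x. x \<in> {0..l0} \<Longrightarrow> (P1l has_vector_derivative P2l x) (at x within {0..l0})"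
    and P''_l: "continuous_on {0..l0} P2l"
    \<comment> \<open>restriction to [l0,l] is C^2 (one-sided derivatives at the endpoints)\<close>
    and W_r: "\<And>x. x \<in> {l0..l} \<Longrightarrow> (W has_vector_derivative W1r x) (at x within {l0..l})"
    and W'_r: "\<And>x. x \<in> {l0..l} \<Longrightarrow> (W1r has_vector_derivative W2r x) (at x within {l0..l})"
    and W''_r: "continuous_on {l0..l} W2r"
    and P_r: "\<And>x. x \<in> {l0..l} \<Longrightarrow> (Psi has_vector_derivative P1r x) (at x within {l0..l})"
    and P'_r: "\<And>x. x \<in> {l0..l} \<Longrightarrow> (P1r has_vector_derivative P2r x) (at x within {l0..l})"
    and P''_r: "continuous_on {l0..l} P2r"
    \<comment> \<open>the ODE system on (0,l0) and on (l0,l)\<close>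
    and ode1_l: "\<And>x. x \<in> {0<..<l0} \<Longrightarrow>
        of_real K * (W2l x - P1l x) - of_real rho * s\<^sup>2 * W x = 0"
    and ode2_l: "\<And>x. x \<in> {0<..<l0} \<Longrightarrow>
        of_real EI * P2l x + of_real K * (W1l x - Psi x) - of_real Irho * s\<^sup>2 * Psi x = 0"
    and ode1_r: "\<And>x. x \<in> {l0<..<l} \<Longrightarrow>
        of_real K * (W2r x - P1r x) - of_real rho * s\<^sup>2 * W x = 0"
    and ode2_r: "\<And>x. x \<in> {l0<..<l} \<Longrightarrow>
        of_real EI * P2r x + of_real K * (W1r x - Psi x) - of_real Irho * s\<^sup>2 * Psi x = 0"
    \<comment> \<open>boundary conditions\<close>
    and bc: "W 0 = 0" "W l = 0" "P1l 0 = 0" "P1r l = 0"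
    \<comment> \<open>interface conditions (continuity of W and Psi is automatic: single functions)\<close>
    and ifc_P': "P1l l0 = P1r l0"
    and ifc_F: "of_real K * (W1l l0 - W1r l0)
                + (of_real m * s\<^sup>2 + of_real kappa + of_real d * s) * W l0 = U"
  shows "\<forall>lk \<in> {0..l}.
           W lk = H1 rho Irho EI K m kappa d l l0 lk s * U \<and>
           (if lk \<le> l0 then P1l lk else P1r lk) = H2 rho Irho EI K m kappa d l l0 lk s * U"
  proof -
  define a0 where "a0 = a_coef rho Irho EI K s"
  define b0 where "b0 = b_coef rho Irho EI K s"
  define r0 where "r0 = csqrt (a0\<^sup>2 - b0)"
  define L1 where "L1 = lam1 rho Irho EI K s"
  define L2 where "L2 = lam2 rho Irho EI K s"
  define Q where "Q = (of_real K + of_real Irho * s\<^sup>2 :: complex)"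
  have Kc: "(of_real K :: complex) \<noteq> 0" "(of_real EI :: complex) \<noteq> 0" using pos by auto
  have L1sq: "L1\<^sup>2 = a0 + r0" unfolding L1_def lam1_def r0_def a0_def b0_def by simp
  have L2sq: "L2\<^sup>2 = a0 - r0" unfolding L2_def lam2_def r0_def a0_def b0_def by simp
  have r0sq: "r0\<^sup>2 = a0\<^sup>2 - b0" unfolding r0_def by simp
  have LP0: "L1\<^sup>2 * L2\<^sup>2 = b0" unfolding L1sq L2sq using r0sq by (simp add: algebra_simps power2_eq_square)
  have LS: "L1\<^sup>2 + L2\<^sup>2 = s\<^sup>2 * (of_real rho / of_real K + of_real Irho / of_real EI)"
    unfolding L1sq L2sq a0_def a_coef_def by simp
  have LP: "L1\<^sup>2 * L2\<^sup>2 = (of_real K + of_real Irho * s\<^sup>2) * of_real rho * s\<^sup>2 / (of_real K * of_real EI)"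
    unfolding LP0 b0_def b_coef_def by simp
  have L1z: "L1 \<noteq> 0" using LP0 s_b unfolding b0_def by auto
  have L2z: "L2 \<noteq> 0" using LP0 s_b unfolding b0_def by auto
  have L12: "L1\<^sup>2 \<noteq> L2\<^sup>2"
  proof
    assume "L1\<^sup>2 = L2\<^sup>2"
    then have "r0 = 0" unfolding L1sq L2sq by simp
    then have "a0\<^sup>2 = b0" using r0sq by simp
    then show False using s_ab unfolding a0_def b0_def by simp
  qed
  have "\<exists>A1 B1. \<forall>x\<in>{0..l0}.
      W x = A1 * z2 L1 L2 (x - 0) + B1 * z4 L1 L2 (x - 0) \<and>
      W1l x = A1 * z1 L1 L2 (x - 0) + B1 * z3 L1 L2 (x - 0) \<and>
      Psi x = of_real EI / (of_real K + of_real Irho * s\<^sup>2) *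
         (A1 * (- (L1\<^sup>2 * L2\<^sup>2) * z3 L1 L2 (x - 0)) + B1 * z6 L1 L2 (x - 0)
          + (of_real K / of_real EI - of_real rho * s\<^sup>2 / of_real K) * (A1 * z1 L1 L2 (x - 0) + B1 * z3 L1 L2 (x - 0))) \<and>
      P1l x = A1 * (- (L1\<^sup>2 * L2\<^sup>2) * z4 L1 L2 (x - 0)) + B1 * z5 L1 L2 (x - 0)
          - of_real rho * s\<^sup>2 / of_real K * (A1 * z2 L1 L2 (x - 0) + B1 * z4 L1 L2 (x - 0))"
    by (rule side[OF pos(4) pos(3) s_K L1z L2z L12 LS LP, of 0 l0 0 W W1l W2l Psi P1l P2l]) (use l0 W_l W'_l P_l P'_l ode1_l ode2_l bc in auto)
  then obtain A1 B1 where LL: "\<forall>x\<in>{0..l0}.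
      W x = A1 * z2 L1 L2 (x - 0) + B1 * z4 L1 L2 (x - 0) \<and>
      W1l x = A1 * z1 L1 L2 (x - 0) + B1 * z3 L1 L2 (x - 0) \<and>
      Psi x = of_real EI / (of_real K + of_real Irho * s\<^sup>2) *
         (A1 * (- (L1\<^sup>2 * L2\<^sup>2) * z3 L1 L2 (x - 0)) + B1 * z6 L1 L2 (x - 0)
          + (of_real K / of_real EI - of_real rho * s\<^sup>2 / of_real K) * (A1 * z1 L1 L2 (x - 0) + B1 * z3 L1 L2 (x - 0))) \<and>
      P1l x = A1 * (- (L1\<^sup>2 * L2\<^sup>2) * z4 L1 L2 (x - 0)) + B1 * z5 L1 L2 (x - 0)
          - of_real rho * s\<^sup>2 / of_real K * (A1 * z2 L1 L2 (x - 0) + B1 * z4 L1 L2 (x - 0))" by blast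
  have "\<exists>A3 B3. \<forall>x\<in>{l0..l}.
      W x = A3 * z2 L1 L2 (x - l) + B3 * z4 L1 L2 (x - l) \<and>
      W1r x = A3 * z1 L1 L2 (x - l) + B3 * z3 L1 L2 (x - l) \<and>
      Psi x = of_real EI / (of_real K + of_real Irho * s\<^sup>2) *
         (A3 * (- (L1\<^sup>2 * L2\<^sup>2) * z3 L1 L2 (x - l)) + B3 * z6 L1 L2 (x - l)
          + (of_real K / of_real EI - of_real rho * s\<^sup>2 / of_real K) * (A3 * z1 L1 L2 (x - l) + B3 * z3 L1 L2 (x - l))) \<and>
      P1r x = A3 * (- (L1\<^sup>2 * L2\<^sup>2) * z4 L1 L2 (x - l)) + B3 * z5 L1 L2 (x - l)
          - of_real rho * s\<^sup>2 / of_real K * (A3 * z2 L1 L2 (x - l) + B3 * z4 L1 L2 (x - l))"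
    by (rule side[OF pos(4) pos(3) s_K L1z L2z L12 LS LP, of l0 l l W W1r W2r Psi P1r P2r]) (use l0 W_r W'_r P_r P'_r ode1_r ode2_r bc in auto)
  then obtain A3 B3 where RR: "\<forall>x\<in>{l0..l}.
      W x = A3 * z2 L1 L2 (x - l) + B3 * z4 L1 L2 (x - l) \<and>
      W1r x = A3 * z1 L1 L2 (x - l) + B3 * z3 L1 L2 (x - l) \<and>
      Psi x = of_real EI / (of_real K + of_real Irho * s\<^sup>2) *
         (A3 * (- (L1\<^sup>2 * L2\<^sup>2) * z3 L1 L2 (x - l)) + B3 * z6 L1 L2 (x - l)
          + (of_real K / of_real EI - of_real rho * s\<^sup>2 / of_real K) * (A3 * z1 L1 L2 (x - l) + B3 * z3 L1 L2 (x - l))) \<and>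
      P1r x = A3 * (- (L1\<^sup>2 * L2\<^sup>2) * z4 L1 L2 (x - l)) + B3 * z5 L1 L2 (x - l)
          - of_real rho * s\<^sup>2 / of_real K * (A3 * z2 L1 L2 (x - l) + B3 * z4 L1 L2 (x - l))" by blast
  define M where "M = Mmat rho Irho EI K m kappa d l l0 s"
  define Mi where "Mi = matrix_inv M"
  define v where "v = (of_real (K / EI) - of_real rho * s\<^sup>2 / of_real K :: complex)"
  define v1 where "v1 = (of_real rho * s\<^sup>2 / of_real K :: complex)"
  define v2 where "v2 = ((of_real m * s\<^sup>2 + of_real d * s + of_real kappa) / of_real K :: complex)"
  define \<beta> where "\<beta> = L1\<^sup>2 * L2\<^sup>2"
  define zo1 where "zo1 = z1 L1 L2 l0"
  define zo2 where "zo2 = z2 L1 L2 l0"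
  define zo3 where "zo3 = z3 L1 L2 l0"
  define zo4 where "zo4 = z4 L1 L2 l0"
  define zo5 where "zo5 = z5 L1 L2 l0"
  define zo6 where "zo6 = z6 L1 L2 l0"
  define zm1 where "zm1 = z1 L1 L2 (l0 - l)"
  define zm2 where "zm2 = z2 L1 L2 (l0 - l)"
  define zm3 where "zm3 = z3 L1 L2 (l0 - l)"
  define zm4 where "zm4 = z4 L1 L2 (l0 - l)"
  define zm5 where "zm5 = z5 L1 L2 (l0 - l)"
  define zm6 where "zm6 = z6 L1 L2 (l0 - l)"
  have vv: "of_real K / of_real EI - of_real rho * s\<^sup>2 / of_real K = v" unfolding v_def by simp
  have l0L: "l0 \<in> {0..l0}" and l0R: "l0 \<in> {l0..l}" using l0 by auto
  have wl: "W l0 = A1 * zo2 + B1 * zo4" and w1l: "W1l l0 = A1 * zo1 + B1 * zo3"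
    and pl: "Psi l0 = of_real EI / Q * (A1 * (- \<beta> * zo3) + B1 * zo6 + v * (A1 * zo1 + B1 * zo3))"
    and p1l: "P1l l0 = A1 * (- \<beta> * zo4) + B1 * zo5 - v1 * (A1 * zo2 + B1 * zo4)"
    using LL[rule_format, OF l0L] unfolding zo1_def zo2_def zo3_def zo4_def zo5_def zo6_def \<beta>_def Q_def vv v1_def
    by auto
  have wr: "W l0 = A3 * zm2 + B3 * zm4" and w1r: "W1r l0 = A3 * zm1 + B3 * zm3"
    and pr: "Psi l0 = of_real EI / Q * (A3 * (- \<beta> * zm3) + B3 * zm6 + v * (A3 * zm1 + B3 * zm3))"
    and p1r: "P1r l0 = A3 * (- \<beta> * zm4) + B3 * zm5 - v1 * (A3 * zm2 + B3 * zm4)"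
    using RR[rule_format, OF l0R] unfolding zm1_def zm2_def zm3_def zm4_def zm5_def zm6_def \<beta>_def Q_def vv v1_def
    by auto
  have Q0: "Q \<noteq> 0" using s_K unfolding Q_def .
  have eqP: "A1 * (- \<beta> * zo3) + B1 * zo6 + v * (A1 * zo1 + B1 * zo3) = A3 * (- \<beta> * zm3) + B3 * zm6 + v * (A3 * zm1 + B3 * zm3)"
    using pl pr Q0 Kc by simp
  define c where "c = (vector [of_real K * A1, of_real K * B1, of_real K * A3, of_real K * B3] :: complex^4)"
  have Mrow: "M *v c = vector [0, 0, 0, U]"
  proof -
    have mv: "(M *v c) $ i = M$i$1 * c$1 + M$i$2 * c$2 + M$i$3 * c$3 + M$i$4 * c$4" for i
      by (simp add: matrix_vector_mult_def sum_4)
    have M1: "M$1$1 = zo2" "M$1$2 = zo4" "M$1$3 = - zm2" "M$1$4 = - zm4"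
      and M2: "M$2$1 = v * zo1 - \<beta> * zo3" "M$2$2 = v * zo3 + zo6" "M$2$3 = \<beta> * zm3 - v * zm1" "M$2$4 = - zm6 - v * zm3"
      and M3: "M$3$1 = v1 * zo2 + \<beta> * zo4" "M$3$2 = v1 * zo4 - zo5" "M$3$3 = - \<beta> * zm4 - v1 * zm2" "M$3$4 = zm5 - v1 * zm4"
      and M4: "M$4$1 = zo1 + v2 * zo2" "M$4$2 = zo3 + v2 * zo4" "M$4$3 = - zm1" "M$4$4 = - zm3"
      unfolding M_def Mmat_def Let_def vector4_nth L1_def[symmetric] L2_def[symmetric]
        zo1_def zo2_def zo3_def zo4_def zo5_def zo6_def zm1_def zm2_def zm3_def zm4_def zm5_def zm6_def
        \<beta>_def v_def v1_def v2_def by simp_all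
    have c: "c$1 = of_real K * A1" "c$2 = of_real K * B1" "c$3 = of_real K * A3" "c$4 = of_real K * B3"
      unfolding c_def vector4_nth by simp_all
    have r1: "(M *v c) $ 1 = 0"
    proof -
      have "(M *v c) $ 1 = of_real K * ((A1 * zo2 + B1 * zo4) - (A3 * zm2 + B3 * zm4))"
        unfolding mv M1 c by (simp add: algebra_simps)
      then show ?thesis using wl wr by simp
    qed
    have r2: "(M *v c) $ 2 = 0"
    proof -
      have "(M *v c) $ 2 = of_real K * ((A1 * (- \<beta> * zo3) + B1 * zo6 + v * (A1 * zo1 + B1 * zo3)) - (A3 * (- \<beta> * zm3) + B3 * zm6 + v * (A3 * zm1 + B3 * zm3)))"
        unfolding mv M2 c by (simp add: algebra_simps)
      then show ?thesis using eqP by simp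
    qed
    have r3: "(M *v c) $ 3 = 0"
    proof -
      have "(M *v c) $ 3 = - of_real K * ((A1 * (- \<beta> * zo4) + B1 * zo5 - v1 * (A1 * zo2 + B1 * zo4)) - (A3 * (- \<beta> * zm4) + B3 * zm5 - v1 * (A3 * zm2 + B3 * zm4)))"
        unfolding mv M3 c by (simp add: algebra_simps)
      then show ?thesis using p1l p1r ifc_P' by simp
    qed
    have r4: "(M *v c) $ 4 = U"
    proof -
      have "(M *v c) $ 4 = of_real K * ((A1 * zo1 + B1 * zo3) - (A3 * zm1 + B3 * zm3)) + of_real K * v2 * (A1 * zo2 + B1 * zo4)"
        unfolding mv M4 c by (simp add: algebra_simps)
      also have "\<dots> = of_real K * (W1l l0 - W1r l0) + (of_real m * s\<^sup>2 + of_real kappa + of_real d * s) * W l0"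
        unfolding w1l w1r wl v2_def using Kc by (simp add: field_simps)
      finally show ?thesis using ifc_F by simp
    qed
    show ?thesis unfolding vec_eq_iff forall_4 vector4_nth using r1 r2 r3 r4 by simp
  qed
  have MiM: "Mi ** M = mat 1"
    unfolding Mi_def matrix_inv_def using M_inv unfolding invertible_def M_def
    by (rule someI2_ex) auto
  have cMi: "c = Mi *v vector [0, 0, 0, U]"
    using arg_cong[OF Mrow, of "\<lambda>x. Mi *v x"] unfolding matrix_vector_mul_assoc MiM by simp
  have ce: "of_real K * A1 = Mi$1$4 * U" "of_real K * B1 = Mi$2$4 * U"
     "of_real K * A3 = Mi$3$4 * U" "of_real K * B3 = Mi$4$4 * U"
    using arg_cong[OF cMi, of "\<lambda>x. x$1"] arg_cong[OF cMi, of "\<lambda>x. x$2"]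
      arg_cong[OF cMi, of "\<lambda>x. x$3"] arg_cong[OF cMi, of "\<lambda>x. x$4"]
    unfolding c_def by (simp_all add: matrix_vector_mult_def sum_4 vector4_nth)
  have H1e: "H1 rho Irho EI K m kappa d l l0 lk s * U =
     (if lk \<le> l0 then (z2 L1 L2 lk * (Mi$1$4 * U) + z4 L1 L2 lk * (Mi$2$4 * U)) / of_real K
      else (z2 L1 L2 (lk - l) * (Mi$3$4 * U) + z4 L1 L2 (lk - l) * (Mi$4$4 * U)) / of_real K)" for lk
    unfolding H1_def Let_def L1_def[symmetric] L2_def[symmetric] M_def[symmetric] Mi_def[symmetric]
    by (simp add: algebra_simps add_divide_distrib)
  have H2e: "H2 rho Irho EI K m kappa d l l0 lk s * U =
     (if lk \<le> l0 then ((- \<beta> * of_real K * z4 L1 L2 lk - of_real rho * s\<^sup>2 * z2 L1 L2 lk) * (Mi$1$4 * U)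
         + (of_real K * z5 L1 L2 lk - of_real rho * s\<^sup>2 * z4 L1 L2 lk) * (Mi$2$4 * U)) / (of_real K)\<^sup>2
      else ((- \<beta> * of_real K * z4 L1 L2 (lk - l) - of_real rho * s\<^sup>2 * z2 L1 L2 (lk - l)) * (Mi$3$4 * U)
         + (of_real K * z5 L1 L2 (lk - l) - of_real rho * s\<^sup>2 * z4 L1 L2 (lk - l)) * (Mi$4$4 * U)) / (of_real K)\<^sup>2)" for lk
    unfolding H2_def Let_def L1_def[symmetric] L2_def[symmetric] M_def[symmetric] Mi_def[symmetric] \<beta>_def
    by (simp add: algebra_simps add_divide_distrib)
  show ?thesis
  proof
    fix lk assume lk: "lk \<in> {0..l}"
    show "W lk = H1 rho Irho EI K m kappa d l l0 lk s * U \<and>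
          (if lk \<le> l0 then P1l lk else P1r lk) = H2 rho Irho EI K m kappa d l l0 lk s * U"
    proof (cases "lk \<le> l0")
      case True
      then have "lk \<in> {0..l0}" using lk by auto
      then have w: "W lk = A1 * z2 L1 L2 lk + B1 * z4 L1 L2 lk" and
        p: "P1l lk = A1 * (- (L1\<^sup>2 * L2\<^sup>2) * z4 L1 L2 lk) + B1 * z5 L1 L2 lk
          - of_real rho * s\<^sup>2 / of_real K * (A1 * z2 L1 L2 lk + B1 * z4 L1 L2 lk)"
        using LL by auto
      have T: "(lk \<le> l0) = True" using True by simp
      show ?thesis
        unfolding H1e H2e ce[symmetric] \<beta>_def T if_True w p using Kc
        by (simp add: field_simps power2_eq_square)
    next
      case False
      then have "lk \<in> {l0..l}" using lk by auto
      then have w: "W lk = A3 * z2 L1 L2 (lk - l) + B3 * z4 L1 L2 (lk - l)" and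
        p: "P1r lk = A3 * (- (L1\<^sup>2 * L2\<^sup>2) * z4 L1 L2 (lk - l)) + B3 * z5 L1 L2 (lk - l)
          - of_real rho * s\<^sup>2 / of_real K * (A3 * z2 L1 L2 (lk - l) + B3 * z4 L1 L2 (lk - l))"
        using RR by auto
      have T: "(lk \<le> l0) = False" using False by simp
      show ?thesis
        unfolding H1e H2e ce[symmetric] \<beta>_def T if_False w p using Kc
        by (simp add: field_simps power2_eq_square)
    qed
  qed
qed

end
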